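(* Let $N\ge 2$ and let $T^{H,F}_N$ be the period of the F-type Hadamard walk on the cycle $C_N$. Then $$T^{H,F}_N=\begin{cases}8,& N=2,\\ 8,& N=4,\\ 24,& N=8,\\ \infty,&\text{otherwise.}\end{cases}$$
   Context: Let $N\ge 2$ and identify the vertex set of the cycle graph $C_N$ with $\mathbb{Z}/N\mathbb{Z}$. The state space is $\mathcal H=\mathbb{C}^{N}\otimes\mathbb{C}^2$ with orthonormal basis $\{|x\rangle\otimes|\leftarrow\rangle,\ |x\rangle\otimes|\rightarrow\rangle : x\in\mathbb{Z}/N\mathbb{Z}\}$. The shift operator $S$ is the unitary with $S(|x\rangle\otimes|\leftarrow\rangle)=|x-1\rangle\otimes|\leftarrow\rangle$ and $S(|x\rangle\otimes|\rightarrow\rangle)=|x+1\rangle\otimes|\rightarrow\rangle$ (indices mod $N$). For a unitary $2\times2$ local coin $A$ (in the basis $(|\leftarrow\rangle,|\rightarrow\rangle)$) the time-evolution operator is $U=S\,(I_N\otimes A)$. The F-type Hadamard walk uses $A^{H,F}=\frac{1}{\sqrt2}\begin{bmatrix}1&-1\\1&1\end{bmatrix}$, with time-evolution operator $U^{H,F}_N$. The period of a walk with time-evolution operator $U$ is $\inf\{n\ge1: U^n=I\}$, defined to be $\infty$ if no such $n$ exists. *)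

theory Defs
  imports "Jordan_Normal_Form.Matrix" "HOL-Library.Extended_Nat" Complex_Main
begin

text \<open>State space C^N (x) C^2, basis vector |x> (x) |left> has index 2*x,
  |x> (x) |right> has index 2*x+1 (x in {0..N-1} representing Z/NZ).
  Coin index 0 = left, 1 = right.\<close>

definition shift_op :: "nat \<Rightarrow> complex mat" where
  "shift_op N = mat (2*N) (2*N) (\<lambda>(i,j).
     if j mod 2 = 0
     then (if i = 2 * ((j div 2 + N - 1) mod N) then 1 else 0)
     else (if i = 2 * ((j div 2 + 1) mod N) + 1 then 1 else 0))"

definition coin_op :: "nat \<Rightarrow> complex mat \<Rightarrow> complex mat" where
  "coin_op N A = mat (2*N) (2*N) (\<lambda>(i,j).
     if i div 2 = j div 2 then A $$ (i mod 2, j mod 2) else 0)"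

definition time_evolution :: "nat \<Rightarrow> complex mat \<Rightarrow> complex mat" where
  "time_evolution N A = shift_op N * coin_op N A"

definition hadamard_F_coin :: "complex mat" where
  "hadamard_F_coin = mat 2 2 (\<lambda>(i,j).
     (if i = 0 \<and> j = 1 then - 1 else 1) / complex_of_real (sqrt 2))"

definition walk_period :: "complex mat \<Rightarrow> enat" where
  "walk_period U = (if \<exists>n::nat. n \<ge> 1 \<and> U ^\<^sub>m n = 1\<^sub>m (dim_row U)
     then enat (LEAST n::nat. n \<ge> 1 \<and> U ^\<^sub>m n = 1\<^sub>m (dim_row U)) else \<infinity>)"

end

theory Submission
  imports Defs "HOL-Computational_Algebra.Primes"
begin

lemma sum_one: "finite S \<Longrightarrow> a \<in> S \<Longrightarrow> (\<And>j. j \<in> S \<Longrightarrow> j \<noteq> a \<Longrightarrow> g j = 0) \<Longrightarrow> sum g S = g a"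
  by (metis (mono_tags, lifting) sum.remove sum.neutral DiffE insertCI add.right_neutral)

lemma sum_two: "finite S \<Longrightarrow> a \<in> S \<Longrightarrow> b \<in> S \<Longrightarrow> a \<noteq> b \<Longrightarrow>
   (\<And>j. j \<in> S \<Longrightarrow> j \<noteq> a \<Longrightarrow> j \<noteq> b \<Longrightarrow> g j = 0) \<Longrightarrow> sum g S = g a + g b"
proof -
  assume f: "finite S" and a: "a \<in> S" and b: "b \<in> S" and ab: "a \<noteq> b"
    and z: "\<And>j. j \<in> S \<Longrightarrow> j \<noteq> a \<Longrightarrow> j \<noteq> b \<Longrightarrow> g j = 0"
  have "sum g S = g a + sum g (S - {a})" using f a by (simp add: sum.remove)
  also have "sum g (S - {a}) = g b"
    by (rule sum_one) (use f b ab z in auto)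
  finally show ?thesis .
qed

abbreviation s2 :: complex where "s2 \<equiv> complex_of_real (sqrt 2)"

lemma s2_sq: "s2 * s2 = 2"
proof -
  have "sqrt 2 * sqrt 2 = (2::real)" by simp
  hence "complex_of_real (sqrt 2 * sqrt 2) = 2" by simp
  thus ?thesis by (simp only: of_real_mult)
qed

lemma s2_nz: "s2 \<noteq> 0" by simp

lemma s2_pow_even: "s2 ^ (2*m) = 2 ^ m"
  by (simp add: power_mult power2_eq_square s2_sq)

lemma shift_carrier: "shift_op N \<in> carrier_mat (2*N) (2*N)"
  by (simp add: shift_op_def)
lemma coin_carrier: "coin_op N A \<in> carrier_mat (2*N) (2*N)"
  by (simp add: coin_op_def)
lemma U_carrier: "time_evolution N A \<in> carrier_mat (2*N) (2*N)"
  unfolding time_evolution_def using shift_carrier coin_carrier by (metis mult_carrier_mat)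

lemma had_entries: "hadamard_F_coin $$ (0,0) = 1/s2" "hadamard_F_coin $$ (0,Suc 0) = -1/s2"
  "hadamard_F_coin $$ (Suc 0,0) = 1/s2" "hadamard_F_coin $$ (Suc 0,Suc 0) = 1/s2"
  by (simp_all add: hadamard_F_coin_def)

lemma coin_entry: "i < 2*N \<Longrightarrow> j < 2*N \<Longrightarrow> coin_op N A $$ (i, j) =
   (if i div 2 = j div 2 then A $$ (i mod 2, j mod 2) else 0)"
  by (simp add: coin_op_def)

lemma coin_apply:
  assumes v: "dim_vec v = 2*N" and i: "i < 2*N"
  shows "(coin_op N hadamard_F_coin *\<^sub>v v) $ i =
     (if even i then (v $ i - v $ (i+1)) / s2 else (v $ (i - 1) + v $ i) / s2)"
proof -
  let ?a = "2 * (i div 2)"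
  let ?g = "\<lambda>j. coin_op N hadamard_F_coin $$ (i, j) * v $ j"
  have ai: "?a < 2*N" "?a + 1 < 2*N" using i by presburger+
  have "(coin_op N hadamard_F_coin *\<^sub>v v) $ i = sum ?g {0..<2*N}"
    using i v by (simp add: coin_op_def scalar_prod_def)
  also have "\<dots> = ?g ?a + ?g (?a+1)"
  proof (rule sum_two)
    fix j assume j: "j \<in> {0..<2*N}" "j \<noteq> ?a" "j \<noteq> ?a + 1"
    have "i div 2 \<noteq> j div 2" using j(2,3) by presburger
    then show "?g j = 0" using j(1) i by (simp add: coin_entry)
  qed (use ai in auto)
  also have "\<dots> = (if even i then (v $ i - v $ (i+1)) / s2 else (v $ (i - 1) + v $ i) / s2)"
  proof (cases "even i")
    case True
    then obtain b where b: "i = 2*b" by blast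
    have "?g ?a = v $ i / s2" using ai b by (simp add: coin_entry had_entries)
    moreover have "?g (?a+1) = - v $ (i+1) / s2" using ai b by (simp add: coin_entry had_entries)
    ultimately show ?thesis using True by (simp add: diff_divide_distrib)
  next
    case False
    then obtain b where b: "i = 2*b+1" by (metis oddE)
    have "?g ?a = v $ (i-1) / s2" using ai b by (simp add: coin_entry had_entries)
    moreover have "?g (?a+1) = v $ i / s2" using ai b by (simp add: coin_entry had_entries)
    ultimately show ?thesis using False by (simp add: add_divide_distrib)
  qed
  finally show ?thesis .
qed

lemma modeq1: "(x::nat) < N \<Longrightarrow> y < N \<Longrightarrow> (y = (x + N - 1) mod N) \<longleftrightarrow> (x = (y + 1) mod N)"
proof -
  assume x: "x < N" and y: "y < N"
  have h1: "(x + N - 1) mod N = (if x = 0 then N - 1 else x - 1)" using x by (simp add: mod_if)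
  have h2: "(y+1) mod N = (if y + 1 = N then 0 else y + 1)" using y by (simp add: mod_if)
  show ?thesis unfolding h1 h2 using x y by auto
qed

lemma shift_apply:
  assumes w: "dim_vec w = 2*N" and y: "y < N"
  shows "(shift_op N *\<^sub>v w) $ (2*y) = w $ (2 * ((y+1) mod N))"
    and "(shift_op N *\<^sub>v w) $ (2*y+1) = w $ (2 * ((y + N - 1) mod N) + 1)"
proof -
  have N: "N > 0" using y by simp
  let ?g = "\<lambda>i j. shift_op N $$ (i, j) * w $ j"
  let ?a = "2 * ((y+1) mod N)"
  have "(shift_op N *\<^sub>v w) $ (2*y) = sum (?g (2*y)) {0..<2*N}"
    using y w by (simp add: shift_op_def scalar_prod_def)
  also have "\<dots> = ?g (2*y) ?a"
  proof (rule sum_one)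
    fix j assume j: "j \<in> {0..<2*N}" "j \<noteq> ?a"
    show "?g (2*y) j = 0"
    proof (cases "even j")
      case True
      then obtain x where x: "j = 2*x" by blast
      have "x < N" using j x by auto
      then have "y \<noteq> (x + N - 1) mod N" using modeq1[of x N y] y j x by auto
      then show ?thesis using j x y by (simp add: shift_op_def)
    next
      case False
      then obtain x where x: "j = 2*x+1" by (metis oddE)
      have "2*y \<noteq> 2 * ((x + 1) mod N) + 1"
      proof
        assume h: "2*y = 2 * ((x + 1) mod N) + 1"
        have "even (2*y)" by simp
        then show False unfolding h by simp
      qed
      then show ?thesis using j x y by (simp add: shift_op_def)
    qed
  qed (use N in auto)
  also have "\<dots> = w $ ?a"
  proof -
    have "((y+1) mod N + N - 1) mod N = y" using modeq1[of "(y+1) mod N" N y] y N by auto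
    then show ?thesis using y N by (simp add: shift_op_def)
  qed
  finally show "(shift_op N *\<^sub>v w) $ (2*y) = w $ (2 * ((y+1) mod N))" .
  let ?b = "2 * ((y + N - 1) mod N) + 1"
  have "(shift_op N *\<^sub>v w) $ (2*y+1) = sum (?g (2*y+1)) {0..<2*N}"
    using y w by (simp add: shift_op_def scalar_prod_def)
  also have "\<dots> = ?g (2*y+1) ?b"
  proof (rule sum_one)
    fix j assume j: "j \<in> {0..<2*N}" "j \<noteq> ?b"
    show "?g (2*y+1) j = 0"
    proof (cases "even j")
      case True
      then obtain x where x: "j = 2*x" by blast
      have "2*y+1 \<noteq> 2 * ((x + N - 1) mod N)"
      proof
        assume h: "2*y+1 = 2 * ((x + N - 1) mod N)"
        have "even (2 * ((x + N - 1) mod N))" by simp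
        then show False unfolding h[symmetric] by simp
      qed
      then show ?thesis using j x y by (simp add: shift_op_def)
    next
      case False
      then obtain x where x: "j = 2*x+1" by (metis oddE)
      have "x < N" using j x by auto
      then have "y \<noteq> (x + 1) mod N" using modeq1[of y N x] y j x by auto
      then show ?thesis using j x y by (simp add: shift_op_def)
    qed
  qed (use N mod_less_divisor[OF N, of "y+N-1"] in auto)
  also have "\<dots> = w $ ?b"
  proof -
    have "((y + N - 1) mod N + 1) mod N = y" using modeq1[of y N "(y + N - 1) mod N"] y N by auto
    moreover have "2 * ((y + N - 1) mod N) + 1 < 2*N" using mod_less_divisor[OF N, of "y+N-1"] by linarith
    ultimately show ?thesis using y N by (simp add: shift_op_def)
  qed
  finally show "(shift_op N *\<^sub>v w) $ (2*y+1) = w $ (2 * ((y + N - 1) mod N) + 1)" .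
qed

abbreviation UF :: "nat \<Rightarrow> complex mat" where "UF N \<equiv> time_evolution N hadamard_F_coin"

lemma U_apply:
  assumes v: "dim_vec v = 2*N" and y: "y < N"
  shows "(UF N *\<^sub>v v) $ (2*y) = (v $ (2 * ((y+1) mod N)) - v $ (2 * ((y+1) mod N) + 1)) / s2"
    and "(UF N *\<^sub>v v) $ (2*y+1) = (v $ (2 * ((y + N - 1) mod N)) + v $ (2 * ((y + N - 1) mod N) + 1)) / s2"
proof -
  have N: "N > 0" using y by linarith
  have vc: "v \<in> carrier_vec (2*N)" using v by (rule carrier_vecI)
  have e: "UF N *\<^sub>v v = shift_op N *\<^sub>v (coin_op N hadamard_F_coin *\<^sub>v v)"
    unfolding time_evolution_def using assoc_mult_mat_vec[OF shift_carrier coin_carrier vc] .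
  have dw: "dim_vec (coin_op N hadamard_F_coin *\<^sub>v v) = 2*N" by (simp add: coin_op_def)
  define z1 where "z1 = (y+1) mod N"
  define z2 where "z2 = (y + N - 1) mod N"
  have m1: "z1 < N" "z2 < N" using N by (auto simp: z1_def z2_def)
  have c1: "(coin_op N hadamard_F_coin *\<^sub>v v) $ (2*z1) = (v $ (2*z1) - v $ (2*z1+1)) / s2"
    using coin_apply[OF v, of "2*z1"] m1 by simp
  have c2: "(coin_op N hadamard_F_coin *\<^sub>v v) $ (2*z2+1) = (v $ (2*z2) + v $ (2*z2+1)) / s2"
    using coin_apply[OF v, of "2*z2+1"] m1 by simp
  show "(UF N *\<^sub>v v) $ (2*y) = (v $ (2 * ((y+1) mod N)) - v $ (2 * ((y+1) mod N) + 1)) / s2"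
    unfolding e shift_apply(1)[OF dw y] z1_def[symmetric] by (rule c1)
  show "(UF N *\<^sub>v v) $ (2*y+1) = (v $ (2 * ((y + N - 1) mod N)) + v $ (2 * ((y + N - 1) mod N) + 1)) / s2"
    unfolding e shift_apply(2)[OF dw y] z2_def[symmetric] by (rule c2)
qed

type_synonym st = "(int \<Rightarrow> complex) \<times> (int \<Rightarrow> complex)"

definition Mop :: "st \<Rightarrow> st" where
  "Mop P = (\<lambda>y. fst P (y+1) - snd P (y+1), \<lambda>y. fst P (y-1) + snd P (y-1))"
definition psc :: "complex \<Rightarrow> st \<Rightarrow> st" where
  "psc c P = (\<lambda>y. c * fst P y, \<lambda>y. c * snd P y)"
definition padd :: "st \<Rightarrow> st \<Rightarrow> st" where
  "padd P Q = (\<lambda>y. fst P y + fst Q y, \<lambda>y. snd P y + snd Q y)"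
definition Hs :: "(int \<Rightarrow> 'a::plus) \<Rightarrow> int \<Rightarrow> 'a" where
  "Hs f y = f (y+2) + f (y-2)"
definition Hop :: "st \<Rightarrow> st" where
  "Hop P = (Hs (fst P), Hs (snd P))"
definition Gop :: "st \<Rightarrow> st" where
  "Gop P = psc (1/2) (Hop P)"
definition Xi :: "nat \<Rightarrow> st \<Rightarrow> st" where
  "Xi i P = psc (1/2^i) ((Mop^^(2*i)) P)"
definition Per :: "nat \<Rightarrow> st \<Rightarrow> bool" where
  "Per N P = (\<forall>y. fst P y = fst P (y mod int N) \<and> snd P y = snd P (y mod int N))"
definition intP :: "st \<Rightarrow> bool" where
  "intP P = (\<forall>y. fst P y \<in> \<int> \<and> snd P y \<in> \<int>)"

lemma Mop_padd: "Mop (padd P Q) = padd (Mop P) (Mop Q)"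
  by (simp add: Mop_def padd_def algebra_simps)
lemma Mop_psc: "Mop (psc c P) = psc c (Mop P)"
  by (simp add: Mop_def psc_def algebra_simps)
lemma Mopn_psc: "(Mop^^k) (psc c P) = psc c ((Mop^^k) P)"
  by (induction k) (simp_all add: Mop_psc)
lemma Hop_padd: "Hop (padd P Q) = padd (Hop P) (Hop Q)"
  by (simp add: Hop_def Hs_def padd_def fun_eq_iff algebra_simps)
lemma Hop_psc: "Hop (psc c P) = psc c (Hop P)"
  by (simp add: Hop_def Hs_def psc_def fun_eq_iff algebra_simps)
lemma psc_psc: "psc a (psc b P) = psc (a*b) P"
  by (simp add: psc_def algebra_simps)
lemma psc_1: "psc 1 P = P"
  by (simp add: psc_def)
lemma psc_padd: "psc c (padd P Q) = padd (psc c P) (psc c Q)"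
  by (simp add: psc_def padd_def algebra_simps)
lemma Gop_padd: "Gop (padd P Q) = padd (Gop P) (Gop Q)"
  by (simp add: Gop_def Hop_padd psc_padd)
lemma Gopn_padd: "(Gop^^k) (padd P Q) = padd ((Gop^^k) P) ((Gop^^k) Q)"
  by (induction k) (simp_all add: Gop_padd)
lemma Gopn_eq: "(Gop^^k) P = psc (1/2^k) ((Hop^^k) P)"
proof (induction k)
  case 0 then show ?case by (simp add: psc_1)
next
  case (Suc k)
  then show ?case by (simp add: Gop_def Hop_psc psc_psc)
qed
lemma Hopn: "(Hop^^k) P = ((Hs^^k) (fst P), (Hs^^k) (snd P))"
  by (induction k) (simp_all add: Hop_def)

lemma Per_shift:
  assumes h: "Per N P"
  shows "fst P (y + c) = fst P (y mod int N + c)" "snd P (y + c) = snd P (y mod int N + c)"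
    "fst P (y - c) = fst P (y mod int N - c)" "snd P (y - c) = snd P (y mod int N - c)"
proof -
  have e1: "(y mod int N + c) mod int N = (y + c) mod int N" by (rule mod_add_left_eq)
  have e2: "(y mod int N - c) mod int N = (y - c) mod int N" by (rule mod_diff_left_eq)
  show "fst P (y + c) = fst P (y mod int N + c)"
    using h unfolding Per_def by (metis e1)
  show "snd P (y + c) = snd P (y mod int N + c)"
    using h unfolding Per_def by (metis e1)
  show "fst P (y - c) = fst P (y mod int N - c)"
    using h unfolding Per_def by (metis e2)
  show "snd P (y - c) = snd P (y mod int N - c)"
    using h unfolding Per_def by (metis e2)
qed

lemma Mop_Per: "Per N P \<Longrightarrow> Per N (Mop P)"
proof -
  assume h: "Per N P"
  show ?thesis unfolding Per_def[of N "Mop P"]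
  proof
    fix y
    show "fst (Mop P) y = fst (Mop P) (y mod int N) \<and> snd (Mop P) y = snd (Mop P) (y mod int N)"
      unfolding Mop_def using Per_shift[OF h, of y 1] by simp
  qed
qed
lemma Mopn_Per: "Per N P \<Longrightarrow> Per N ((Mop^^k) P)"
  by (induction k) (simp_all add: Mop_Per)
lemma psc_Per: "Per N P \<Longrightarrow> Per N (psc c P)"
  unfolding Per_def psc_def by simp
lemma Mop_int: "intP P \<Longrightarrow> intP (Mop P)"
  unfolding intP_def Mop_def by auto
lemma Mopn_int: "intP P \<Longrightarrow> intP ((Mop^^k) P)"
  by (induction k) (simp_all add: Mop_int)
lemma padd_int: "intP P \<Longrightarrow> intP Q \<Longrightarrow> intP (padd P Q)"
  unfolding intP_def padd_def by auto
lemma psc_int: "intP P \<Longrightarrow> intP (psc (2^k) P)"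
  unfolding intP_def psc_def by auto

lemma key_identity: "padd ((Mop^^4) P) (padd (psc 2 ((Mop^^2) P)) (psc 4 P)) = Hop ((Mop^^2) P)"
  by (simp add: numeral_eq_Suc Mop_def padd_def psc_def Hop_def Hs_def fun_eq_iff algebra_simps)

lemma psc_cong: "a = b \<Longrightarrow> psc a P = psc b P" by simp

lemma Hs_of_int: "(Hs^^j) (\<lambda>y. (of_int (v y)::complex)) = (\<lambda>y. of_int ((Hs^^j) v y))"
  by (induction j) (simp_all add: Hs_def fun_eq_iff)

lemma dvd_from_Ints:
  assumes "(of_int a / (2::complex)^m) \<in> \<int>"
  shows "(2::int)^m dvd a"
proof -
  obtain z where z: "of_int a / (2::complex)^m = of_int z" using assms by (elim Ints_cases)
  then have "(of_int a :: complex) = of_int (2^m * z)" by (simp add: field_simps)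
  then have "a = 2^m * z" using of_int_eq_iff by blast
  then show ?thesis by simp
qed

locale hypo =
  fixes N n :: nat
  assumes n: "n \<ge> 1" and N: "N > 0"
  and hyp: "\<And>P. Per N P \<Longrightarrow> (Mop^^n) P = psc (s2^n) P"
begin

lemma M2n: "Per N P \<Longrightarrow> (Mop^^(2*n)) P = psc (2^n) P"
proof -
  assume h: "Per N P"
  have "(Mop^^(2*n)) P = (Mop^^n) ((Mop^^n) P)"
    by (simp add: mult_2 funpow_add)
  also have "\<dots> = psc (s2^n * s2^n) P" using h hyp Mopn_psc by (simp add: psc_psc)
  also have "s2^n * s2^n = 2^n" by (simp add: power_mult_distrib[symmetric] s2_sq)
  finally show ?thesis .
qed

lemma Xi_add: "Per N P \<Longrightarrow> Xi (i+n) P = Xi i P"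
proof -
  assume h: "Per N P"
  have "Xi (i+n) P = psc (1/2^(i+n)) ((Mop^^(2*i)) ((Mop^^(2*n)) P))"
    unfolding Xi_def by (simp add: funpow_add algebra_simps)
  also have "\<dots> = psc (1/2^(i+n) * 2^n) ((Mop^^(2*i)) P)"
    using M2n[OF h] by (simp add: Mopn_psc psc_psc)
  also have "(1::complex)/2^(i+n) * 2^n = 1/2^i" by (simp add: power_add)
  finally show ?thesis unfolding Xi_def .
qed

lemma Xi_mod: "Per N P \<Longrightarrow> Xi i P = Xi (i mod n) P"
proof -
  assume h: "Per N P"
  have "Xi (r + q*n) P = Xi r P" for r q
  proof (induction q)
    case 0 then show ?case by simp
  next
    case (Suc q)
    have "Xi (r + Suc q * n) P = Xi ((r + q*n) + n) P" by (simp add: algebra_simps)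
    also have "\<dots> = Xi (r + q*n) P" by (rule Xi_add[OF h])
    finally show ?case using Suc by simp
  qed
  then show ?thesis by (metis mod_div_mult_eq)
qed

lemma Xi_ident: "padd (Xi (i+2) P) (padd (Xi (i+1) P) (Xi i P)) = Gop (Xi (i+1) P)"
proof -
  define Q where "Q = (Mop^^(2*i)) P"
  have e4: "2*(i+2) = 4 + 2*i" "2*(i+1) = 2 + 2*i" by simp_all
  have a: "Xi (i+2) P = psc (1/2^(i+2)) ((Mop^^4) Q)"
    unfolding Xi_def Q_def by (simp only: e4 funpow_add o_apply)
  have b: "Xi (i+1) P = psc (1/2^(i+1)) ((Mop^^2) Q)"
    unfolding Xi_def Q_def by (simp only: e4 funpow_add o_apply)
  have c: "Xi i P = psc (1/2^i) Q" unfolding Xi_def Q_def by simp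
  have "Gop (Xi (i+1) P) = psc (1/2^(i+2)) (Hop ((Mop^^2) Q))"
    unfolding b Gop_def by (simp add: Hop_psc psc_psc)
  also have "\<dots> = psc (1/2^(i+2)) (padd ((Mop^^4) Q) (padd (psc 2 ((Mop^^2) Q)) (psc 4 Q)))"
    by (simp add: key_identity)
  also have "\<dots> = padd (psc (1/2^(i+2)) ((Mop^^4) Q)) (padd (psc (1/2^(i+2) * 2) ((Mop^^2) Q))
       (psc (1/2^(i+2) * 4) Q))"
    by (simp add: psc_padd psc_psc)
  also have "(1::complex)/2^(i+2) * 2 = 1/2^(i+1)" by simp
  also have "(1::complex)/2^(i+2) * 4 = 1/2^i" by simp
  finally show ?thesis unfolding a b c by simp
qed

lemma Grel: "Per N P \<Longrightarrow> Gop (Xi i P) = padd (Xi (i+1) P) (padd (Xi i P) (Xi (i+n-1) P))"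
proof -
  assume h: "Per N P"
  have "padd (Xi ((i+n-1)+2) P) (padd (Xi ((i+n-1)+1) P) (Xi (i+n-1) P)) = Gop (Xi ((i+n-1)+1) P)"
    by (rule Xi_ident)
  moreover have "(i+n-1)+2 = (i+1)+n" "(i+n-1)+1 = i+n" using n by auto
  moreover have "Xi ((i+1)+n) P = Xi (i+1) P" "Xi (i+n) P = Xi i P" using Xi_add[OF h] by blast+
  ultimately show ?thesis by simp
qed

lemma Xi_int: "Per N P \<Longrightarrow> intP P \<Longrightarrow> intP (psc (2^n) (Xi i P))"
proof -
  assume h: "Per N P" and hi: "intP P"
  define k where "k = i mod n"
  have k: "k < n" using n by (simp add: k_def)
  have "psc (2^n) (Xi i P) = psc (2^n * (1/2^k)) ((Mop^^(2*k)) P)"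
    using Xi_mod[OF h, of i] unfolding Xi_def k_def by (simp add: psc_psc)
  also have "(2::complex)^n * (1/2^k) = 2^(n-k)"
  proof -
    have "(2::complex)^n = 2^k * 2^(n-k)" using k by (simp add: power_add[symmetric])
    then show ?thesis by simp
  qed
  finally show ?thesis using psc_int Mopn_int hi by simp
qed

lemma Gj_int: "Per N P \<Longrightarrow> intP P \<Longrightarrow> intP (psc (2^n) ((Gop^^j) (Xi i P)))"
proof (induction j arbitrary: i)
  case 0 then show ?case using Xi_int by simp
next
  case (Suc j)
  have "(Gop^^Suc j) (Xi i P) = (Gop^^j) (Gop (Xi i P))" by (simp only: funpow_Suc_right o_apply)
  also have "\<dots> = padd ((Gop^^j) (Xi (i+1) P)) (padd ((Gop^^j) (Xi i P)) ((Gop^^j) (Xi (i+n-1) P)))"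
    using Grel[OF Suc.prems(1)] by (simp add: Gopn_padd)
  finally show ?case using Suc by (simp add: psc_padd padd_int)
qed

lemma KEY:
  assumes per: "\<And>y. v y = v (y mod int N)" and j: "n \<le> j"
  shows "(2::int)^(j-n) dvd (Hs^^j) v y"
proof -
  define P where "P = ((\<lambda>y. of_int (v y)) :: int \<Rightarrow> complex, (\<lambda>y. 0) :: int \<Rightarrow> complex)"
  have pP: "Per N P" unfolding P_def Per_def using per by simp
  have iP: "intP P" unfolding P_def intP_def by simp
  have x0: "Xi 0 P = P" unfolding Xi_def by (simp add: psc_1)
  have "intP (psc (2^n) ((Gop^^j) P))" using Gj_int[OF pP iP, of j 0] x0 by simp
  then have "2^n * (1/2^j * of_int ((Hs^^j) v y)) \<in> (\<int>::complex set)"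
    unfolding intP_def Gopn_eq Hopn psc_def P_def by (simp add: Hs_of_int)
  moreover have "(2::complex)^n * (1/2^j * of_int ((Hs^^j) v y)) = of_int ((Hs^^j) v y) / 2^(j-n)"
  proof -
    have "(2::complex)^j = 2^n * 2^(j-n)" using j by (simp add: power_add[symmetric])
    then show ?thesis by simp
  qed
  ultimately show ?thesis using dvd_from_Ints by simp
qed

end

lemma Hsn_shift: "(Hs^^k) (\<lambda>y. f (y + c)) = (\<lambda>y. (Hs^^k) f (y + c))"
  by (induction k) (simp_all add: Hs_def fun_eq_iff algebra_simps)

lemma Hsn_shift_m: "(Hs^^k) (\<lambda>y. f (y - c)) = (\<lambda>y. (Hs^^k) f (y - c))"
  by (induction k) (simp_all add: Hs_def fun_eq_iff algebra_simps)

lemma Hsn_add: "(Hs^^k) (\<lambda>y. (f::int\<Rightarrow>int) y + g y) = (\<lambda>y. (Hs^^k) f y + (Hs^^k) g y)"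
  by (induction k) (simp_all add: Hs_def fun_eq_iff algebra_simps)

lemma Hsn_cong2: "(\<And>y. (2::int) dvd (f y - g y)) \<Longrightarrow> 2 dvd ((Hs^^k) f y - (Hs^^k) g y)"
proof (induction k arbitrary: y)
  case 0 then show ?case by simp
next
  case (Suc k)
  have "(Hs^^Suc k) f y - (Hs^^Suc k) g y =
     ((Hs^^k) f (y+2) - (Hs^^k) g (y+2)) + ((Hs^^k) f (y-2) - (Hs^^k) g (y-2))"
    by (simp add: Hs_def)
  then show ?case using Suc by (metis dvd_add)
qed

lemma dtrans: "(2::int) dvd (x - y) \<Longrightarrow> 2 dvd (y - z) \<Longrightarrow> 2 dvd (x - z)"
  by (metis diff_add_cancel dvd_add add_diff_eq)

lemma frob: "(2::int) dvd ((Hs^^(2^e)) v y - (v (y + 2^(e+1)) + v (y - 2^(e+1))))"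
proof (induction e arbitrary: y)
  case 0 then show ?case by (simp add: Hs_def)
next
  case (Suc e)
  define k :: nat where "k = 2^e"
  define a :: int where "a = 2^(e+1)"
  have IH: "\<And>y. (2::int) dvd ((Hs^^k) v y - (v (y + a) + v (y - a)))"
    using Suc unfolding k_def a_def by blast
  have "(Hs^^(2^(Suc e))) v = (Hs^^k) ((Hs^^k) v)"
    unfolding k_def by (simp add: mult_2 funpow_add)
  then have F1: "(Hs^^(2^(Suc e))) v y = (Hs^^k) ((Hs^^k) v) y" by simp
  have F2: "2 dvd ((Hs^^k) ((Hs^^k) v) y - (Hs^^k) (\<lambda>y. v (y + a) + v (y - a)) y)"
    by (rule Hsn_cong2) (rule IH)
  have F3: "(Hs^^k) (\<lambda>y. v (y + a) + v (y - a)) y = (Hs^^k) v (y + a) + (Hs^^k) v (y - a)"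
  proof -
    have "(Hs^^k) (\<lambda>y. v (y + a) + v (y - a)) = (\<lambda>y. (Hs^^k) (\<lambda>y. v (y + a)) y + (Hs^^k) (\<lambda>y. v (y - a)) y)"
      by (rule Hsn_add)
    then show ?thesis by (simp add: Hsn_shift Hsn_shift_m)
  qed
  define D where "D = (v (y + a + a) + v (y + a - a)) + (v (y - a + a) + v (y - a - a))"
  have EqD: "((Hs^^k) v (y + a) + (Hs^^k) v (y - a)) - D =
     ((Hs^^k) v (y + a) - (v (y + a + a) + v (y + a - a))) + ((Hs^^k) v (y - a) - (v (y - a + a) + v (y - a - a)))"
    unfolding D_def by (simp add: algebra_simps)
  have F4: "2 dvd (((Hs^^k) v (y + a) + (Hs^^k) v (y - a)) - D)"
    by (subst EqD) (rule dvd_add[OF IH[of "y+a"] IH[of "y-a"]])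
  have F5: "D - (v (y + 2^(Suc e + 1)) + v (y - 2^(Suc e + 1))) = 2 * v y"
    unfolding a_def D_def by (simp add: algebra_simps)
  have EqF: "(Hs^^(2^(Suc e))) v y - (v (y + 2^(Suc e + 1)) + v (y - 2^(Suc e + 1))) =
     ((Hs^^k) ((Hs^^k) v) y - (Hs^^k) (\<lambda>y. v (y + a) + v (y - a)) y)
     + (((Hs^^k) v (y + a) + (Hs^^k) v (y - a)) - D) + 2 * v y"
    unfolding F1 F3[symmetric] F5[symmetric] by simp
  show ?case by (subst EqF) (intro dvd_add F2 F4 dvd_triv_left)
qed

lemma obstrA:
  fixes N n :: nat
  assumes N: "N > 0" and np: "\<And>m. N \<noteq> 2^m"
  and K: "\<And>v j y. (\<And>y. v y = v (y mod int N)) \<Longrightarrow> n \<le> j \<Longrightarrow> (2::int)^(j-n) dvd (Hs^^j) v y"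
  shows False
proof -
  define v :: "int \<Rightarrow> int" where "v y = (if y mod int N = 0 then 1 else 0)" for y
  have per: "\<And>y. v y = v (y mod int N)" unfolding v_def by simp
  define a :: int where "a = 2^(n+1)"
  have jn: "n < 2^n" by (rule less_exp)
  have "(2::int)^(2^n - n) dvd (Hs^^(2^n)) v a" by (rule K[of v "2^n" a]) (use per jn in auto)
  moreover have "(2::int) dvd 2^(2^n - n)" using jn by simp
  ultimately have d1: "2 dvd (Hs^^(2^n)) v a" by (rule dvd_trans[rotated])
  have d2: "2 dvd ((Hs^^(2^n)) v a - (v (a + a) + v (a - a)))" using frob[of n v a] unfolding a_def by simp
  have "\<not> int N dvd a + a"
  proof
    assume "int N dvd a + a"
    then have "int N dvd int (2^(n+2))" unfolding a_def by (simp add: power_add)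
    then have "N dvd 2^(n+2)" by (simp only: of_nat_dvd_iff)
    then obtain m where "N = 2^m" using divides_primepow_nat[OF two_is_prime_nat] by blast
    then show False using np by blast
  qed
  then have "v (a + a) = 0" unfolding v_def by (simp add: dvd_eq_mod_eq_0)
  moreover have "v (a - a) = 1" unfolding v_def by simp
  ultimately have "2 dvd ((Hs^^(2^n)) v a - 1)" using d2 by simp
  from dvd_diff[OF d1 this] have "(2::int) dvd 1" by simp
  then show False by simp
qed

lemma obstrB:
  fixes N n :: nat
  assumes N16: "16 dvd N"
  and K: "\<And>v j y. (\<And>y. v y = v (y mod int N)) \<Longrightarrow> n \<le> j \<Longrightarrow> (2::int)^(j-n) dvd (Hs^^j) v y"
  shows False
proof -
  define v :: "int \<Rightarrow> int" where "v y = (if y mod 16 = 0 then 1 else if y mod 16 = 8 then -1 else 0)" for y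
  have d16: "(16::int) dvd int N" using N16 by (metis of_nat_dvd_iff of_nat_numeral)
  have per: "\<And>y. v y = v (y mod int N)" unfolding v_def using mod_mod_cancel[OF d16] by simp
  have hh: "Hs (Hs v) = (\<lambda>y. 2 * v y)"
  proof
    fix y :: int
    define r where "r = y mod 16"
    have e1: "(y + 2 + 2) mod 16 = (r + 4) mod 16" unfolding r_def by (simp add: mod_add_left_eq add.assoc)
    have e2: "(y - 2 - 2) mod 16 = (r + 12) mod 16"
    proof -
      have "y - 2 - 2 = (y + 12) + 16 * (-1)" by simp
      then have "(y - 2 - 2) mod 16 = (y + 12) mod 16" by (metis mod_mult_self1 mult.commute)
      then show ?thesis unfolding r_def by (simp add: mod_add_left_eq)
    qed
    have "r = 0 \<or> r = 1 \<or> r = 2 \<or> r = 3 \<or> r = 4 \<or> r = 5 \<or> r = 6 \<or> r = 7 \<or> r = 8 \<or>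
      r = 9 \<or> r = 10 \<or> r = 11 \<or> r = 12 \<or> r = 13 \<or> r = 14 \<or> r = 15" unfolding r_def by presburger
    then have "v (y + 2 + 2) + v (y - 2 - 2) = 0" unfolding v_def e1 e2 by (elim disjE) simp_all
    then show "Hs (Hs v) y = 2 * v y" unfolding Hs_def by (simp add: algebra_simps)
  qed
  have lin: "Hs (\<lambda>y. c * f y) = (\<lambda>y. c * Hs f y)" for c :: int and f
    by (simp add: Hs_def fun_eq_iff algebra_simps)
  have pw: "(Hs^^(2*m)) v = (\<lambda>y. 2^m * v y)" for m
  proof (induction m)
    case 0 then show ?case by simp
  next
    case (Suc m)
    have "(Hs^^(2*Suc m)) v = Hs (Hs ((Hs^^(2*m)) v))" by simp
    also have "\<dots> = (\<lambda>y. 2^Suc m * v y)" unfolding Suc lin hh by (simp add: algebra_simps)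
    finally show ?case .
  qed
  have "(2::int)^(2*(n+1) - n) dvd (Hs^^(2*(n+1))) v 0" by (rule K[of v "2*(n+1)" 0]) (use per in auto)
  then have "(2::int)^(n+2) dvd 2^(n+1)" unfolding pw v_def by (simp add: numeral_eq_Suc)
  moreover have "(2::int)^(n+1) < 2^(n+2)" by simp
  ultimately show False using zdvd_imp_le by (metis not_le zero_less_power zero_less_numeral)
qed

definition lift :: "nat \<Rightarrow> complex vec \<Rightarrow> st" where
  "lift N v = (\<lambda>y. v $ (2 * nat (y mod int N)), \<lambda>y. v $ (2 * nat (y mod int N) + 1))"

lemma natmod_lt: "N > 0 \<Longrightarrow> nat (y mod int N) < N"
  by (simp add: nat_less_iff)

lemma natmod1: "N > 0 \<Longrightarrow> nat ((y+1) mod int N) = (nat (y mod int N) + 1) mod N"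
proof -
  assume N: "N > 0"
  define m where "m = nat (y mod int N)"
  have im: "int m = y mod int N" unfolding m_def using N by simp
  have "int ((m+1) mod N) = (int m + 1) mod int N" by (simp add: of_nat_mod add.commute)
  also have "\<dots> = (y + 1) mod int N" unfolding im by (simp add: mod_add_left_eq)
  finally show ?thesis unfolding m_def[symmetric] by (metis nat_int)
qed

lemma natmod2: "N > 0 \<Longrightarrow> nat ((y-1) mod int N) = (nat (y mod int N) + N - 1) mod N"
proof -
  assume N: "N > 0"
  define m where "m = nat (y mod int N)"
  have im: "int m = y mod int N" unfolding m_def using N by simp
  have "int ((m + N - 1) mod N) = int (m + N - 1) mod int N" by (simp add: of_nat_mod)
  also have "int (m + N - 1) = int m - 1 + int N" using N by simp
  also have "(int m - 1 + int N) mod int N = (int m - 1) mod int N" by simp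
  also have "\<dots> = (y - 1) mod int N" unfolding im by (simp add: mod_diff_left_eq)
  finally show ?thesis unfolding m_def[symmetric] by (metis nat_int)
qed

lemma dimU: "dim_row (UF N) = 2*N" using U_carrier[of N] by auto

lemma L1:
  assumes v: "dim_vec v = 2*N" and N: "N > 0"
  shows "lift N (UF N *\<^sub>v v) = psc (1/s2) (Mop (lift N v))"
proof -
  have "fst (lift N (UF N *\<^sub>v v)) y = fst (psc (1/s2) (Mop (lift N v))) y" for y
  proof -
    define m where "m = nat (y mod int N)"
    have m: "m < N" unfolding m_def using natmod_lt[OF N] .
    show ?thesis unfolding lift_def Mop_def psc_def
      using U_apply(1)[OF v m] natmod1[OF N, of y] m_def by simp
  qed
  moreover have "snd (lift N (UF N *\<^sub>v v)) y = snd (psc (1/s2) (Mop (lift N v))) y" for y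
  proof -
    define m where "m = nat (y mod int N)"
    have m: "m < N" unfolding m_def using natmod_lt[OF N] .
    show ?thesis unfolding lift_def Mop_def psc_def
      using U_apply(2)[OF v m] natmod2[OF N, of y] m_def by simp
  qed
  ultimately show ?thesis by (simp add: prod_eq_iff fun_eq_iff)
qed

lemma L2:
  assumes v: "dim_vec v = 2*N" and N: "N > 0"
  shows "lift N (UF N ^\<^sub>m n *\<^sub>v v) = psc (1/s2^n) ((Mop^^n) (lift N v))"
  using v
proof (induction n arbitrary: v)
  case 0
  have "v \<in> carrier_vec (2*N)" using 0 by (rule carrier_vecI)
  then have "UF N ^\<^sub>m 0 *\<^sub>v v = v" unfolding pow_mat.simps dimU by (rule one_mult_mat_vec)
  then show ?case by (simp add: psc_1)
next
  case (Suc n)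
  have vc: "v \<in> carrier_vec (2*N)" using Suc.prems by (rule carrier_vecI)
  have "UF N ^\<^sub>m Suc n *\<^sub>v v = UF N ^\<^sub>m n *\<^sub>v (UF N *\<^sub>v v)"
    using assoc_mult_mat_vec[OF pow_carrier_mat[OF U_carrier] U_carrier vc] by simp
  moreover have "dim_vec (UF N *\<^sub>v v) = 2*N" by (simp add: dimU)
  ultimately have "lift N (UF N ^\<^sub>m Suc n *\<^sub>v v) = psc (1/s2^n) ((Mop^^n) (lift N (UF N *\<^sub>v v)))"
    using Suc.IH by simp
  also have "\<dots> = psc (1/s2^n * (1/s2)) ((Mop^^n) (Mop (lift N v)))"
    unfolding L1[OF Suc.prems N] by (simp add: Mopn_psc psc_psc)
  also have "\<dots> = psc (1/s2^Suc n) ((Mop^^Suc n) (lift N v))"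
    by (simp only: funpow_Suc_right o_apply) (simp add: mult.commute)
  finally show ?case .
qed

lemma L3:
  assumes v: "dim_vec v = 2*N" and w: "dim_vec w = 2*N" and e: "lift N v = lift N w"
  shows "v = w"
proof (rule eq_vecI)
  fix i assume i: "i < dim_vec w"
  define m where "m = i div 2"
  have m: "m < N" using i w unfolding m_def by simp
  have nm: "nat (int m mod int N) = m" using m by simp
  have f: "v $ (2*m) = w $ (2*m)" and s: "v $ (2*m+1) = w $ (2*m+1)"
    using fun_cong[OF arg_cong[OF e, of fst], of "int m"] fun_cong[OF arg_cong[OF e, of snd], of "int m"]
    by (simp_all add: lift_def nm)
  show "v $ i = w $ i"
  proof (cases "even i")
    case True then have "i = 2*m" unfolding m_def by simp
    then show ?thesis using f by simp
  next
    case False then have "i = 2*m+1" unfolding m_def by simp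
    then show ?thesis using s by simp
  qed
qed (use v w in simp)

definition realize :: "nat \<Rightarrow> st \<Rightarrow> complex vec" where
  "realize N P = vec (2*N) (\<lambda>i. if even i then fst P (int (i div 2)) else snd P (int (i div 2)))"

lemma realize_lift: "N > 0 \<Longrightarrow> Per N P \<Longrightarrow> lift N (realize N P) = P"
proof -
  assume N: "N > 0" and p: "Per N P"
  have "fst (lift N (realize N P)) y = fst P y \<and> snd (lift N (realize N P)) y = snd P y" for y
  proof -
    have m: "nat (y mod int N) < N" by (rule natmod_lt[OF N])
    have im: "int (nat (y mod int N)) = y mod int N" using N by simp
    show ?thesis unfolding lift_def realize_def using m p im unfolding Per_def by simp
  qed
  then show ?thesis by (simp add: prod_eq_iff fun_eq_iff)
qed

lemma to_hypo:
  assumes N: "N > 0" and n: "n \<ge> 1" and U: "UF N ^\<^sub>m n = 1\<^sub>m (2*N)"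
  shows "hypo N n"
proof
  show "1 \<le> n" "0 < N" using n N by auto
  fix P assume p: "Per N P"
  define v where "v = realize N P"
  have dv: "dim_vec v = 2*N" unfolding v_def realize_def by simp
  have "UF N ^\<^sub>m n *\<^sub>v v = v" unfolding U by (rule one_mult_mat_vec[OF carrier_vecI[OF dv]])
  then have "P = psc (1/s2^n) ((Mop^^n) P)"
    using L2[OF dv N, of n] realize_lift[OF N p] unfolding v_def by simp
  then have "psc (s2^n) P = psc (s2^n * (1/s2^n)) ((Mop^^n) P)" by (metis psc_psc)
  then show "(Mop^^n) P = psc (s2^n) P" by (simp add: psc_1)
qed

lemma infinite_case:
  assumes N2: "N \<ge> 2" and nN: "N \<noteq> 2" "N \<noteq> 4" "N \<noteq> 8" and n: "n \<ge> 1"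
  shows "UF N ^\<^sub>m n \<noteq> 1\<^sub>m (2*N)"
proof
  assume U: "UF N ^\<^sub>m n = 1\<^sub>m (2*N)"
  have N: "N > 0" using N2 by simp
  interpret hypo N n by (rule to_hypo[OF N n U])
  show False
  proof (cases "\<exists>m. N = 2^m")
    case True
    then obtain m where m: "N = 2^m" by blast
    have "m \<noteq> 0" using m N2 by (cases m) auto
    moreover have "m \<noteq> 1" "m \<noteq> 2" "m \<noteq> 3" using m nN by auto
    ultimately have "m \<ge> 4" by auto
    then have "(2::nat)^4 dvd 2^m" by (rule le_imp_power_dvd)
    then have "16 dvd N" using m by simp
    then show False by (rule obstrB) (rule KEY)
  next
    case False
    then show False by (intro obstrA[OF N]) (auto intro: KEY)
  qed
qed

definition lstep :: "int list \<times> int list \<Rightarrow> int list \<times> int list" where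
  "lstep P = (rotate 1 (map2 (-) (fst P) (snd P)), rotate (length (fst P) - 1) (map2 (+) (fst P) (snd P)))"

fun iter :: "nat \<Rightarrow> int list \<times> int list \<Rightarrow> int list \<times> int list" where
  "iter 0 x = x" | "iter (Suc n) x = iter n (lstep x)"

definition liftL :: "nat \<Rightarrow> int list \<times> int list \<Rightarrow> st" where
  "liftL N S = (\<lambda>y. of_int (fst S ! nat (y mod int N)), \<lambda>y. of_int (snd S ! nat (y mod int N)))"

definition ul :: "nat \<Rightarrow> nat \<Rightarrow> int list" where
  "ul N x = map (\<lambda>j. if j = x then 1 else 0) [0..<N]"

definition SK :: "nat \<Rightarrow> nat \<Rightarrow> int list \<times> int list" where
  "SK N k = (if even k then (ul N (k div 2), replicate N 0) else (replicate N 0, ul N (k div 2)))"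

lemma lstep_len: "length (fst S) = N \<Longrightarrow> length (snd S) = N \<Longrightarrow>
   length (fst (lstep S)) = N \<and> length (snd (lstep S)) = N"
  by (simp add: lstep_def)

lemma L4:
  assumes a: "length (fst S) = N" and b: "length (snd S) = N" and N: "N > 0"
  shows "Mop (liftL N S) = liftL N (lstep S)"
proof -
  have "fst (Mop (liftL N S)) y = fst (liftL N (lstep S)) y \<and> snd (Mop (liftL N S)) y = snd (liftL N (lstep S)) y" for y
  proof -
    define m where "m = nat (y mod int N)"
    have m: "m < N" unfolding m_def using natmod_lt[OF N] .
    have r1: "rotate 1 (map2 (-) (fst S) (snd S)) ! m = fst S ! ((m+1) mod N) - snd S ! ((m+1) mod N)"
    proof -
      have "rotate 1 (map2 (-) (fst S) (snd S)) ! m = (map2 (-) (fst S) (snd S)) ! ((1 + m) mod N)"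
        using nth_rotate[where m=1 and xs="map2 (-) (fst S) (snd S)" and n=m] m a b by simp
      moreover have "(1 + m) mod N < N" using N by simp
      ultimately show ?thesis using a b by (simp add: add.commute)
    qed
    have r2: "rotate (N - 1) (map2 (+) (fst S) (snd S)) ! m = fst S ! ((m+N-1) mod N) + snd S ! ((m+N-1) mod N)"
    proof -
      have "(N - 1 + m) mod N = (m + N - 1) mod N" using N by (simp add: algebra_simps)
      moreover have "rotate (N - 1) (map2 (+) (fst S) (snd S)) ! m = (map2 (+) (fst S) (snd S)) ! ((N - 1 + m) mod N)"
        using nth_rotate[where m="N-1" and xs="map2 (+) (fst S) (snd S)" and n=m] m a b by simp
      moreover have "(N - 1 + m) mod N < N" using N by simp
      ultimately show ?thesis using a b by simp
    qed
    show ?thesis unfolding Mop_def liftL_def lstep_def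
      using r1 r2 natmod1[OF N, of y] natmod2[OF N, of y] a unfolding m_def by simp
  qed
  then show ?thesis by (simp add: prod_eq_iff fun_eq_iff)
qed

lemma L4n:
  "length (fst S) = N \<Longrightarrow> length (snd S) = N \<Longrightarrow> N > 0 \<Longrightarrow> (Mop^^k) (liftL N S) = liftL N (iter k S)"
proof (induction k arbitrary: S)
  case 0 then show ?case by simp
next
  case (Suc k)
  have "(Mop^^Suc k) (liftL N S) = (Mop^^k) (Mop (liftL N S))" by (simp only: funpow_Suc_right o_apply)
  also have "\<dots> = (Mop^^k) (liftL N (lstep S))" by (simp add: L4[OF Suc.prems])
  also have "\<dots> = liftL N (iter k (lstep S))" using Suc lstep_len by blast
  finally show ?case by simp
qed

lemma L5:
  assumes k: "k < 2*N" and N: "N > 0"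
  shows "lift N (unit_vec (2*N) k) = liftL N (SK N k)"
proof -
  have "fst (lift N (unit_vec (2*N) k)) y = fst (liftL N (SK N k)) y \<and>
        snd (lift N (unit_vec (2*N) k)) y = snd (liftL N (SK N k)) y" for y
  proof -
    define m where "m = nat (y mod int N)"
    have m: "m < N" unfolding m_def using natmod_lt[OF N] .
    have mm: "nat (y mod int N) = m" unfolding m_def ..
    have "fst (lift N (unit_vec (2*N) k)) y = (if 2*m = k then 1 else 0)"
      using m k by (simp add: lift_def mm)
    moreover have "fst (liftL N (SK N k)) y = (if 2*m = k then 1 else 0)"
      using m by (auto simp add: liftL_def mm SK_def ul_def; presburger)
    moreover have "snd (lift N (unit_vec (2*N) k)) y = (if 2*m+1 = k then 1 else 0)"
      using m k by (simp add: lift_def mm)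
    moreover have "snd (liftL N (SK N k)) y = (if 2*m+1 = k then 1 else 0)"
      using m by (auto simp add: liftL_def mm SK_def ul_def; presburger)
    ultimately show ?thesis by simp
  qed
  then show ?thesis by (simp add: prod_eq_iff fun_eq_iff)
qed

lemma SK_len: "length (fst (SK N k)) = N" "length (snd (SK N k)) = N"
  by (simp_all add: SK_def ul_def)

lemma matvec_unit:
  assumes A: "(A :: complex mat) \<in> carrier_mat n n" and i: "i < n" and k: "k < n"
  shows "(A *\<^sub>v unit_vec n k) $ i = A $$ (i,k)"
proof -
  have "(A *\<^sub>v unit_vec n k) $ i = (\<Sum>j\<in>{0..<n}. A $$ (i,j) * unit_vec n k $ j)"
    using A i by (simp add: scalar_prod_def)
  also have "\<dots> = A $$ (i,k) * unit_vec n k $ k"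
    by (rule sum_one) (use k in auto)
  finally show ?thesis using k by simp
qed

lemma pos:
  assumes N: "N > 0"
  and comp: "\<And>k. k < 2*N \<Longrightarrow> iter p (SK N k) = (map ((*) c) (fst (SK N k)), map ((*) c) (snd (SK N k)))"
  and sc: "s2^p = of_int c"
  shows "UF N ^\<^sub>m p = 1\<^sub>m (2*N)"
proof (rule eq_matI)
  fix i k assume i: "i < dim_row (1\<^sub>m (2*N) :: complex mat)" and k: "k < dim_col (1\<^sub>m (2*N) :: complex mat)"
  have i': "i < 2*N" and k': "k < 2*N" using i k by auto
  have UC: "UF N ^\<^sub>m p \<in> carrier_mat (2*N) (2*N)" by (rule pow_carrier_mat[OF U_carrier])
  have du: "dim_vec (unit_vec (2*N) k :: complex vec) = 2*N" by simp
  have "lift N (UF N ^\<^sub>m p *\<^sub>v unit_vec (2*N) k) = psc (1/s2^p) ((Mop^^p) (liftL N (SK N k)))"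
    using L2[OF du N, of p] L5[OF k' N] by simp
  also have "\<dots> = psc (1/s2^p) (liftL N (iter p (SK N k)))"
    using L4n[OF SK_len N] by simp
  also have "liftL N (iter p (SK N k)) = psc (of_int c) (liftL N (SK N k))"
  proof -
    have "nat (y mod int N) < N" for y by (rule natmod_lt[OF N])
    then show ?thesis unfolding comp[OF k'] liftL_def psc_def using SK_len[of N k] by simp
  qed
  also have "psc (1/s2^p) (psc (of_int c) (liftL N (SK N k))) = liftL N (SK N k)"
    unfolding psc_psc sc[symmetric] using s2_nz by (simp add: psc_1)
  also have "\<dots> = lift N (unit_vec (2*N) k)" using L5[OF k' N] by simp
  finally have eql: "lift N (UF N ^\<^sub>m p *\<^sub>v unit_vec (2*N) k) = lift N (unit_vec (2*N) k)" .
  have d1: "dim_vec (UF N ^\<^sub>m p *\<^sub>v unit_vec (2*N) k) = 2*N" by (simp add: dimU)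
  have "UF N ^\<^sub>m p *\<^sub>v unit_vec (2*N) k = unit_vec (2*N) k"
    by (rule L3[OF d1 du eql])
  then have "(UF N ^\<^sub>m p *\<^sub>v unit_vec (2*N) k) $ i = (if i = k then 1 else 0)" using i' k' by simp
  then show "(UF N ^\<^sub>m p) $$ (i,k) = 1\<^sub>m (2*N) $$ (i,k)"
    using matvec_unit[OF UC i' k'] i' k' by simp
qed (use U_carrier in auto)

lemma neg:
  assumes N: "N > 0" and x: "x < N"
  and w: "(x \<noteq> 0 \<and> fst (iter n (SK N 0)) ! x \<noteq> 0) \<or> snd (iter n (SK N 0)) ! x \<noteq> 0"
  shows "UF N ^\<^sub>m n \<noteq> 1\<^sub>m (2*N)"
proof
  assume U: "UF N ^\<^sub>m n = 1\<^sub>m (2*N)"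
  have k0: "0 < 2*N" using N by simp
  have du: "dim_vec (unit_vec (2*N) 0 :: complex vec) = 2*N" by simp
  have "UF N ^\<^sub>m n *\<^sub>v unit_vec (2*N) 0 = unit_vec (2*N) 0"
    unfolding U by (rule one_mult_mat_vec) simp
  then have E: "psc (1/s2^n) (liftL N (iter n (SK N 0))) = liftL N (SK N 0)"
    using L2[OF du N, of n] L5[OF k0 N] L4n[OF SK_len N] by simp
  have nx: "nat (int x mod int N) = x" using x by (simp add: zmod_int[symmetric])
  have "fst (psc (1/s2^n) (liftL N (iter n (SK N 0)))) (int x) = fst (liftL N (SK N 0)) (int x)"
    using E by simp
  then have e1: "(1/s2^n) * of_int (fst (iter n (SK N 0)) ! x) = of_int (fst (SK N 0) ! x)"
    by (simp add: psc_def liftL_def nx)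
  have "snd (psc (1/s2^n) (liftL N (iter n (SK N 0)))) (int x) = snd (liftL N (SK N 0)) (int x)"
    using E by simp
  then have e2: "(1/s2^n) * of_int (snd (iter n (SK N 0)) ! x) = of_int (snd (SK N 0) ! x)"
    by (simp add: psc_def liftL_def nx)
  have f0: "x \<noteq> 0 \<Longrightarrow> fst (SK N 0) ! x = 0" using x by (simp add: SK_def ul_def)
  have s0: "snd (SK N 0) ! x = 0" using x by (simp add: SK_def)
  show False using w e1 e2 f0 s0 s2_nz by auto
qed

lemma neg2: "UF 2 ^\<^sub>m 4 \<noteq> 1\<^sub>m 4"
proof
  assume U: "UF 2 ^\<^sub>m 4 = 1\<^sub>m 4"
  have N: "(2::nat) > 0" by simp
  have k0: "0 < 2*(2::nat)" by simp
  have du: "dim_vec (unit_vec (2*2) 0 :: complex vec) = 2*2" by simp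
  have "UF 2 ^\<^sub>m 4 *\<^sub>v unit_vec (2*2) 0 = unit_vec (2*2) 0"
    unfolding U by (rule one_mult_mat_vec) simp
  then have E: "psc (1/s2^4) (liftL 2 (iter 4 (SK 2 0))) = liftL 2 (SK 2 0)"
    using L2[OF du N, of 4] L5[OF k0 N] L4n[OF SK_len N] by simp
  have "fst (psc (1/s2^4) (liftL 2 (iter 4 (SK 2 0)))) 0 = fst (liftL 2 (SK 2 0)) 0"
    using E by simp
  then have "(1/s2^4) * of_int (fst (iter 4 (SK 2 0)) ! 0) = of_int (fst (SK 2 0) ! 0)"
    by (simp add: psc_def liftL_def)
  moreover have "fst (iter 4 (SK 2 0)) ! 0 = -4" by code_simp
  moreover have "fst (SK 2 0) ! 0 = 1" by code_simp
  moreover have "s2^4 = 4" using s2_pow_even[of 2] by simp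
  ultimately show False by simp
qed

definition ck :: "nat \<Rightarrow> nat \<Rightarrow> int \<Rightarrow> nat \<Rightarrow> bool" where
  "ck N p c k = (iter p (SK N k) = (map ((*) c) (fst (SK N k)), map ((*) c) (snd (SK N k))))"
definition mk :: "nat \<Rightarrow> nat \<Rightarrow> bool" where
  "mk N n = list_ex (\<lambda>x. (x \<noteq> 0 \<and> fst (iter n (SK N 0)) ! x \<noteq> 0) \<or> snd (iter n (SK N 0)) ! x \<noteq> 0) [0..<N]"

lemma c8: "list_all (ck 8 24 4096) [0..<16]"
  by code_simp
lemma c4: "list_all (ck 4 8 16) [0..<8]"
  by code_simp
lemma c2: "list_all (ck 2 8 16) [0..<4]"
  by code_simp
lemma m8: "list_all (mk 8) [1..<24]"
  by code_simp
lemma m4: "list_all (mk 4) [1..<8]"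
  by code_simp
lemma m2: "list_all (mk 2) ([1..<4] @ [5..<8])"
  by code_simp

lemma period_of:
  assumes one: "UF N ^\<^sub>m p = 1\<^sub>m (2*N)" and p: "p \<ge> 1"
  and ne: "\<And>n. 1 \<le> n \<Longrightarrow> n < p \<Longrightarrow> UF N ^\<^sub>m n \<noteq> 1\<^sub>m (2*N)"
  shows "walk_period (UF N) = enat p"
proof -
  have ex: "\<exists>n::nat. n \<ge> 1 \<and> UF N ^\<^sub>m n = 1\<^sub>m (dim_row (UF N))" using one p dimU by auto
  have "(LEAST n::nat. n \<ge> 1 \<and> UF N ^\<^sub>m n = 1\<^sub>m (dim_row (UF N))) = p"
  proof (rule Least_equality)
    show "p \<ge> 1 \<and> UF N ^\<^sub>m p = 1\<^sub>m (dim_row (UF N))" using one p dimU by auto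
  next
    fix m assume "m \<ge> 1 \<and> UF N ^\<^sub>m m = 1\<^sub>m (dim_row (UF N))"
    then show "p \<le> m" using ne dimU by (metis not_le)
  qed
  then show ?thesis unfolding walk_period_def using ex by simp
qed

lemma case8: "walk_period (UF 8) = 24"
proof -
  have "UF 8 ^\<^sub>m 24 = 1\<^sub>m (2*8)"
  proof (rule pos[where c=4096])
    fix k assume "k < 2*(8::nat)"
    then show "iter 24 (SK 8 k) = (map ((*) 4096) (fst (SK 8 k)), map ((*) 4096) (snd (SK 8 k)))"
      using c8 by (simp add: list_all_iff ck_def)
  next
    show "s2^24 = of_int 4096" using s2_pow_even[of 12] by simp
  qed simp
  moreover have "UF 8 ^\<^sub>m n \<noteq> 1\<^sub>m (2*8)" if "1 \<le> n" "n < 24" for n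
  proof -
    have "n \<in> set [1..<24]" using that by simp
    then obtain x where "x \<in> set [0..<8]" "(x \<noteq> 0 \<and> fst (iter n (SK 8 0)) ! x \<noteq> 0) \<or> snd (iter n (SK 8 0)) ! x \<noteq> 0"
      using m8 unfolding list_all_iff mk_def list_ex_iff by blast
    then show ?thesis by (intro neg[of 8 x]) auto
  qed
  ultimately have "walk_period (UF 8) = enat 24" by (intro period_of) auto
  then show ?thesis by (simp add: numeral_eq_enat)
qed

lemma case4: "walk_period (UF 4) = 8"
proof -
  have "UF 4 ^\<^sub>m 8 = 1\<^sub>m (2*4)"
  proof (rule pos[where c=16])
    fix k assume "k < 2*(4::nat)"
    then show "iter 8 (SK 4 k) = (map ((*) 16) (fst (SK 4 k)), map ((*) 16) (snd (SK 4 k)))"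
      using c4 by (simp add: list_all_iff ck_def)
  next
    show "s2^8 = of_int 16" using s2_pow_even[of 4] by simp
  qed simp
  moreover have "UF 4 ^\<^sub>m n \<noteq> 1\<^sub>m (2*4)" if "1 \<le> n" "n < 8" for n
  proof -
    have "n \<in> set [1..<8]" using that by simp
    then obtain x where "x \<in> set [0..<4]" "(x \<noteq> 0 \<and> fst (iter n (SK 4 0)) ! x \<noteq> 0) \<or> snd (iter n (SK 4 0)) ! x \<noteq> 0"
      using m4 unfolding list_all_iff mk_def list_ex_iff by blast
    then show ?thesis by (intro neg[of 4 x]) auto
  qed
  ultimately have "walk_period (UF 4) = enat 8" by (intro period_of) auto
  then show ?thesis by (simp add: numeral_eq_enat)
qed

lemma case2: "walk_period (UF 2) = 8"
proof -
  have "UF 2 ^\<^sub>m 8 = 1\<^sub>m (2*2)"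
  proof (rule pos[where c=16])
    fix k assume "k < 2*(2::nat)"
    then show "iter 8 (SK 2 k) = (map ((*) 16) (fst (SK 2 k)), map ((*) 16) (snd (SK 2 k)))"
      using c2 by (simp add: list_all_iff ck_def)
  next
    show "s2^8 = of_int 16" using s2_pow_even[of 4] by simp
  qed simp
  moreover have "UF 2 ^\<^sub>m n \<noteq> 1\<^sub>m (2*2)" if "1 \<le> n" "n < 8" for n
  proof (cases "n = 4")
    case True then show ?thesis using neg2 by simp
  next
    case False
    have "n \<in> set ([1..<4] @ [5..<8])" using that False by auto
    then obtain x where "x \<in> set [0..<2]" "(x \<noteq> 0 \<and> fst (iter n (SK 2 0)) ! x \<noteq> 0) \<or> snd (iter n (SK 2 0)) ! x \<noteq> 0"
      using m2 unfolding list_all_iff mk_def list_ex_iff by blast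
    then show ?thesis by (intro neg[of 2 x]) auto
  qed
  ultimately have "walk_period (UF 2) = enat 8" by (intro period_of) auto
  then show ?thesis by (simp add: numeral_eq_enat)
qed

theorem theorem5p2:
  fixes N :: nat
  assumes "N \<ge> 2"
  shows "walk_period (time_evolution N hadamard_F_coin) =
    (if N = 2 then 8 else if N = 4 then 8 else if N = 8 then 24 else \<infinity>)"
proof -
  consider "N = 2" | "N = 4" | "N = 8" | "N \<noteq> 2 \<and> N \<noteq> 4 \<and> N \<noteq> 8" by blast
  then show ?thesis
  proof cases
    case 1 then show ?thesis using case2 by simp
  next
    case 2 then show ?thesis using case4 by simp
  next
    case 3 then show ?thesis using case8 by simp
  next
    case 4
    have "\<not> (\<exists>n::nat. n \<ge> 1 \<and> UF N ^\<^sub>m n = 1\<^sub>m (dim_row (UF N)))"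
      using infinite_case[OF assms] 4 dimU by metis
    then show ?thesis using 4 unfolding walk_period_def by simp
  qed
qed

end
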